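(* Let $M^{2n+1}(f,Q,\xi,\eta,g)$ be a weak nearly Sasakian manifold satisfying $(\nabla_X\widetilde Q)Y=0$ for all $X\in TM$, $Y\in\ker\eta$, and let $h=\nabla\xi+f$ (i.e., $hX=\nabla_X\xi+fX$). Then $h=0$ if and only if the manifold is Sasakian (i.e., $Q=\mathrm{id}$ and $(f,\xi,\eta,g)$ is a Sasakian structure).
   Context: A weak almost contact metric structure on $M^{2n+1}$ consists of a $(1,1)$-tensor field $f$ of rank $2n$, a vector field $\xi$, a $1$-form $\eta$, a nonsingular $(1,1)$-tensor field $Q$ and a Riemannian metric $g$ such that $f^2=-Q+\eta\otimes\xi$, $\eta(\xi)=1$, $Q\xi=\xi$, $\ker\eta$ is $f$-invariant, and $g(fX,fY)=g(X,QY)-\eta(X)\eta(Y)$. $\widetilde Q=Q-\mathrm{id}$, $\nabla$ is the Levi-Civita connection. Weak nearly Sasakian means $(\nabla_Xf)Y+(\nabla_Yf)X=2g(X,Y)\xi-\eta(Y)X-\eta(X)Y$ for all $X,Y$. A Sasakian structure is one with $Q=\mathrm{id}$ and $(\nabla_Xf)Y=g(X,Y)\xi-\eta(Y)X$ for all $X,Y$. *)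

theory Defs
  imports "HOL-Analysis.Analysis"
begin

text \<open>Local (coordinate) model of a Riemannian manifold: an open set U in real^'n
  with a metric given by a symmetric positive definite matrix field G.
  Vector fields are maps U -> real^'n, (1,1)-tensor fields are matrix fields,
  a 1-form eta is represented by its coefficient vector (eta(v) = eta p \<bullet> v).\<close>

primrec itpd :: "'n list \<Rightarrow> (real^'n \<Rightarrow> 'b::real_normed_vector) \<Rightarrow> real^'n \<Rightarrow> 'b" where
  "itpd [] F = F"
| "itpd (i # is) F = (\<lambda>p. frechet_derivative (itpd is F) (at p) (axis i 1))"

definition smooth_on :: "(real^'n) set \<Rightarrow> (real^'n \<Rightarrow> 'b::real_normed_vector) \<Rightarrow> bool" where
  "smooth_on U F \<longleftrightarrow> (\<forall>is. itpd is F differentiable_on U)"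

definition dD :: "(real^'n \<Rightarrow> 'b::real_normed_vector) \<Rightarrow> real^'n \<Rightarrow> real^'n \<Rightarrow> 'b" where
  "dD F p v = frechet_derivative F (at p) v"

text \<open>Christoffel symbols of the Levi-Civita connection of G:
  Gamma(v,w)^k = 1/2 g^{kl} (\<partial>_v g_{wl} + \<partial>_w g_{vl} - \<partial>_l g(v,w))\<close>
definition christoffel :: "(real^'n \<Rightarrow> real^'n^'n) \<Rightarrow> real^'n \<Rightarrow> real^'n \<Rightarrow> real^'n \<Rightarrow> real^'n" where
  "christoffel G p v w = (1/2) *\<^sub>R (matrix_inv (G p) *v
     (\<chi> l. (dD G p v *v w) $ l + (dD G p w *v v) $ l - v \<bullet> (dD G p (axis l 1) *v w)))"

definition nablaV :: "(real^'n \<Rightarrow> real^'n^'n) \<Rightarrow> (real^'n \<Rightarrow> real^'n) \<Rightarrow> real^'n \<Rightarrow> real^'n \<Rightarrow> real^'n" where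
  "nablaV G Y p v = dD Y p v + christoffel G p v (Y p)"

text \<open>(\<nabla>_v T) w at p for a (1,1)-tensor field T: \<nabla>_v (T W) - T (\<nabla>_v W)\<close>
definition nablaT :: "(real^'n \<Rightarrow> real^'n^'n) \<Rightarrow> (real^'n \<Rightarrow> real^'n^'n) \<Rightarrow> real^'n \<Rightarrow> real^'n \<Rightarrow> real^'n \<Rightarrow> real^'n" where
  "nablaT G T p v w = (dD T p v *v w) + christoffel G p v (T p *v w) - T p *v christoffel G p v w"

definition riemannian_metric :: "(real^'n) set \<Rightarrow> (real^'n \<Rightarrow> real^'n^'n) \<Rightarrow> bool" where
  "riemannian_metric U G \<longleftrightarrow> open U \<and> smooth_on U G \<and>
     (\<forall>p\<in>U. transpose (G p) = G p \<and> (\<forall>v. v \<noteq> 0 \<longrightarrow> v \<bullet> (G p *v v) > 0))"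

definition gm :: "(real^'n \<Rightarrow> real^'n^'n) \<Rightarrow> real^'n \<Rightarrow> real^'n \<Rightarrow> real^'n \<Rightarrow> real" where
  "gm G p v w = v \<bullet> (G p *v w)"

definition weak_almost_contact_metric ::
  "nat \<Rightarrow> (real^'n) set \<Rightarrow> (real^'n \<Rightarrow> real^'n^'n) \<Rightarrow> (real^'n \<Rightarrow> real^'n^'n) \<Rightarrow> (real^'n \<Rightarrow> real^'n)
     \<Rightarrow> (real^'n \<Rightarrow> real^'n) \<Rightarrow> (real^'n \<Rightarrow> real^'n^'n) \<Rightarrow> bool" where
  "weak_almost_contact_metric n U F Q xi eta G \<longleftrightarrow>
     CARD('n) = 2 * n + 1 \<and> riemannian_metric U G \<and>
     smooth_on U F \<and> smooth_on U Q \<and> smooth_on U xi \<and> smooth_on U eta \<and>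
     (\<forall>p\<in>U. rank (F p) = 2 * n \<and> invertible (Q p) \<and>
        (\<forall>v. F p *v (F p *v v) = - (Q p *v v) + (eta p \<bullet> v) *\<^sub>R xi p) \<and>
        eta p \<bullet> xi p = 1 \<and> Q p *v xi p = xi p \<and>
        (\<forall>v. eta p \<bullet> v = 0 \<longrightarrow> eta p \<bullet> (F p *v v) = 0) \<and>
        (\<forall>v w. gm G p (F p *v v) (F p *v w) = gm G p v (Q p *v w) - (eta p \<bullet> v) * (eta p \<bullet> w)))"

definition weak_nearly_sasakian ::
  "nat \<Rightarrow> (real^'n) set \<Rightarrow> (real^'n \<Rightarrow> real^'n^'n) \<Rightarrow> (real^'n \<Rightarrow> real^'n^'n) \<Rightarrow> (real^'n \<Rightarrow> real^'n)
     \<Rightarrow> (real^'n \<Rightarrow> real^'n) \<Rightarrow> (real^'n \<Rightarrow> real^'n^'n) \<Rightarrow> bool" where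
  "weak_nearly_sasakian n U F Q xi eta G \<longleftrightarrow> weak_almost_contact_metric n U F Q xi eta G \<and>
     (\<forall>p\<in>U. \<forall>v w. nablaT G F p v w + nablaT G F p w v
        = (2 * gm G p v w) *\<^sub>R xi p - (eta p \<bullet> w) *\<^sub>R v - (eta p \<bullet> v) *\<^sub>R w)"

definition sasakian ::
  "nat \<Rightarrow> (real^'n) set \<Rightarrow> (real^'n \<Rightarrow> real^'n^'n) \<Rightarrow> (real^'n \<Rightarrow> real^'n^'n) \<Rightarrow> (real^'n \<Rightarrow> real^'n)
     \<Rightarrow> (real^'n \<Rightarrow> real^'n) \<Rightarrow> (real^'n \<Rightarrow> real^'n^'n) \<Rightarrow> bool" where
  "sasakian n U F Q xi eta G \<longleftrightarrow> weak_almost_contact_metric n U F Q xi eta G \<and>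
     (\<forall>p\<in>U. Q p = mat 1 \<and>
        (\<forall>v w. nablaT G F p v w = (gm G p v w) *\<^sub>R xi p - (eta p \<bullet> w) *\<^sub>R v))"

end

theory Submission
  imports Defs
begin


lemma bb_mv: "bounded_bilinear (\<lambda>(A::real^'n^'m) (x::real^'n). A *v x)"
proof -
  have "bilinear (\<lambda>(A::real^'n^'m) (x::real^'n). A *v x)"
    unfolding bilinear_def
    by (auto intro!: linearI simp: matrix_vector_right_distrib matrix_vector_mult_add_rdistrib
         matrix_vector_mult_scaleR scaleR_matrix_vector_assoc)
  thus ?thesis by (simp add: bilinear_conv_bounded_bilinear)
qed

lemma smooth_diff: "smooth_on U T \<Longrightarrow> open U \<Longrightarrow> p \<in> U \<Longrightarrow> T differentiable (at p)"
proof -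
  assume a: "smooth_on U T" "open U" "p \<in> U"
  have "itpd [] T differentiable_on U" using a(1) unfolding smooth_on_def by blast
  thus ?thesis using a by (simp add: differentiable_on_eq_differentiable_at)
qed

lemma smooth_partial_diff: "smooth_on U T \<Longrightarrow> open U \<Longrightarrow> p \<in> U \<Longrightarrow>
   (\<lambda>q. frechet_derivative T (at q) (axis i 1)) differentiable (at p)"
proof -
  assume a: "smooth_on U T" "open U" "p \<in> U"
  have "itpd [i] T differentiable_on U" using a(1) unfolding smooth_on_def by blast
  thus ?thesis using a by (simp add: differentiable_on_eq_differentiable_at)
qed

lemma dD_eq: "dD T p = frechet_derivative T (at p)"
  by (rule ext) (simp add: dD_def)

lemma hasD: "T differentiable (at p) \<Longrightarrow> (T has_derivative dD T p) (at p)"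
  by (simp add: dD_eq frechet_derivative_works)

lemma linD: "T differentiable (at p) \<Longrightarrow> linear (dD T p)"
  using hasD has_derivative_linear by blast

lemma dD_unique: "(T has_derivative T') (at p) \<Longrightarrow> dD T p v = T' v"
  using frechet_derivative_at[of T T' p] by (simp add: dD_def)

lemma dD_local: "T differentiable (at p) \<Longrightarrow> open U \<Longrightarrow> p \<in> U \<Longrightarrow> (\<And>q. q \<in> U \<Longrightarrow> T q = S q)
   \<Longrightarrow> dD S p v = dD T p v"
  using frechet_derivative_transform_within_open[of T p U S] by (simp add: dD_def)

lemma hasD_mv: "(A has_derivative A') (at p) \<Longrightarrow> (X has_derivative X') (at p) \<Longrightarrow>
  ((\<lambda>q. (A q :: real^'n^'m) *v (X q :: real^'n)) has_derivative (\<lambda>h. A p *v X' h + A' h *v X p)) (at p)"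
  using bounded_bilinear.FDERIV[OF bb_mv] by blast

lemma hasD_mvc: "(A has_derivative A') (at p) \<Longrightarrow>
  ((\<lambda>q. (A q :: real^'n^'m) *v (x :: real^'n)) has_derivative (\<lambda>h. A' h *v x)) (at p)"
  using hasD_mv[of A A' p "\<lambda>q. x" "\<lambda>h. 0"] by simp

lemma sym2_aux:
  fixes \<phi> :: "'a::real_normed_vector \<Rightarrow> real"
  assumes U: "open U" "p \<in> U"
  and d1: "\<And>x. x \<in> U \<Longrightarrow> (\<phi> has_derivative \<phi>' x) (at x)"
  and d2: "((\<lambda>x. \<phi>' x v) has_derivative L) (at p)"
  and e: "e > 0"
  shows "\<exists>d>0. \<forall>t. 0 < t \<and> t < d \<longrightarrow>
     \<bar>(\<phi> (p + t *\<^sub>R u + t *\<^sub>R v) - \<phi> (p + t *\<^sub>R u) - \<phi> (p + t *\<^sub>R v) + \<phi> p) - t^2 * L u\<bar> \<le> e * t^2"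
proof -
  define C where "C = norm u + 2 * norm v + 1"
  have C: "C > 0" unfolding C_def by (simp add: add_nonneg_pos)
  have blL: "bounded_linear L" using d2 has_derivative_bounded_linear by blast
  interpret L: bounded_linear L by (fact blL)
  obtain r where r: "r > 0" "ball p r \<subseteq> U" using U open_contains_ball by blast
  have eC: "e / (2*C) > 0" using e C by simp
  obtain \<delta> where \<delta>: "\<delta> > 0" "\<And>y. norm (y - p) < \<delta> \<Longrightarrow>
      norm (\<phi>' y v - \<phi>' p v - L (y - p)) \<le> (e / (2*C)) * norm (y - p)"
    using d2 eC unfolding has_derivative_at_alt by blast
  define d where "d = min \<delta> r / C"
  have d: "d > 0" using \<delta> r C by (simp add: d_def)
  show ?thesis
  proof (intro exI conjI allI impI)
    show "d > 0" by fact
    fix t :: real assume t: "0 < t \<and> t < d"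
    have tC: "t * C < min \<delta> r" using t C by (simp add: d_def pos_less_divide_eq)
    have nb: "norm (t *\<^sub>R u + s *\<^sub>R v) \<le> t * C" "norm (s *\<^sub>R v) \<le> t * C"
      if "0 \<le> s" "s \<le> t" for s
    proof -
      have "norm (t *\<^sub>R u + s *\<^sub>R v) \<le> t * norm u + s * norm v"
        using that t norm_triangle_ineq[of "t *\<^sub>R u" "s *\<^sub>R v"] by simp
      also have "\<dots> \<le> t * norm u + t * norm v" using that by (simp add: mult_right_mono)
      also have "\<dots> \<le> t * C" using t by (simp add: C_def algebra_simps)
      finally show "norm (t *\<^sub>R u + s *\<^sub>R v) \<le> t * C" .
      have "norm (s *\<^sub>R v) \<le> t * norm v" using that by (simp add: mult_right_mono)
      also have "\<dots> \<le> t * C" using t by (simp add: C_def algebra_simps)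
      finally show "norm (s *\<^sub>R v) \<le> t * C" .
    qed
    have inU: "p + y \<in> U" if "norm y \<le> t * C" for y
      using that tC r by (auto simp: dist_norm intro!: subsetD[OF r(2)])
    define g where "g s = \<phi> (p + t *\<^sub>R u + s *\<^sub>R v) - \<phi> (p + s *\<^sub>R v) - s * t * L u" for s
    define g' where "g' s = \<phi>' (p + t *\<^sub>R u + s *\<^sub>R v) v - \<phi>' (p + s *\<^sub>R v) v - t * L u" for s
    have chain: "((\<lambda>s. \<phi> (a + s *\<^sub>R v)) has_real_derivative \<phi>' (a + s *\<^sub>R v) v) (at s)"
      if "a + s *\<^sub>R v \<in> U" for a s
    proof -
      have l: "linear (\<phi>' (a + s *\<^sub>R v))" using d1[OF that] has_derivative_linear by blast
      have h1: "((\<lambda>s. a + s *\<^sub>R v) has_derivative (\<lambda>h. h *\<^sub>R v)) (at s)"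
        by (auto intro!: derivative_eq_intros)
      have "((\<lambda>s. \<phi> (a + s *\<^sub>R v)) has_derivative (\<lambda>h. \<phi>' (a + s *\<^sub>R v) (h *\<^sub>R v))) (at s)"
        using has_derivative_compose[OF h1 d1[OF that]] by (simp add: o_def)
      moreover have "(\<lambda>h. \<phi>' (a + s *\<^sub>R v) (h *\<^sub>R v)) = (*) (\<phi>' (a + s *\<^sub>R v) v)"
        using linear_scale[OF l] by (auto simp: mult.commute)
      ultimately show ?thesis by (simp add: has_field_derivative_def)
    qed
    have gd: "(g has_real_derivative g' s) (at s)" if "0 \<le> s" "s \<le> t" for s
    proof -
      have a1: "p + t *\<^sub>R u + s *\<^sub>R v \<in> U" using inU[OF nb(1)[OF that]] by (simp add: add.assoc)
      have a2: "p + s *\<^sub>R v \<in> U" using inU[OF nb(2)[OF that]] by simp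
      have "((\<lambda>s. s * t * L u) has_real_derivative t * L u) (at s)"
        by (auto intro!: derivative_eq_intros)
      then show ?thesis unfolding g_def g'_def
        using chain[OF a1] chain[OF a2] by (auto intro!: derivative_eq_intros)
    qed
    obtain z where z: "0 < z" "z < t" "g t - g 0 = (t - 0) * g' z"
      using MVT2[of 0 t g g'] gd t by auto
    have gz: "\<bar>g' z\<bar> \<le> e * t"
    proof -
      let ?y1 = "t *\<^sub>R u + z *\<^sub>R v" and ?y2 = "z *\<^sub>R v"
      have n1: "norm ?y1 \<le> t * C" "norm ?y2 \<le> t * C" using nb z by auto
      have b1: "norm (\<phi>' (p + ?y1) v - \<phi>' p v - L ?y1) \<le> (e / (2*C)) * norm ?y1"
        using \<delta>(2)[of "p + ?y1"] n1 tC by simp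
      have b2: "norm (\<phi>' (p + ?y2) v - \<phi>' p v - L ?y2) \<le> (e / (2*C)) * norm ?y2"
        using \<delta>(2)[of "p + ?y2"] n1 tC by simp
      have lin: "L ?y1 - L ?y2 = t * L u" by (simp add: L.add L.scaleR)
      have "g' z = (\<phi>' (p + ?y1) v - \<phi>' p v - L ?y1) - (\<phi>' (p + ?y2) v - \<phi>' p v - L ?y2)"
        unfolding g'_def using lin by (simp add: add.assoc algebra_simps)
      hence "\<bar>g' z\<bar> \<le> (e / (2*C)) * norm ?y1 + (e / (2*C)) * norm ?y2" using b1 b2 by simp
      also have "\<dots> \<le> (e / (2*C)) * (t * C) + (e / (2*C)) * (t * C)"
        using n1 e C by (intro add_mono mult_left_mono) auto
      also have "\<dots> = e * t" using C by simp
      finally show ?thesis .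
    qed
    show "\<bar>(\<phi> (p + t *\<^sub>R u + t *\<^sub>R v) - \<phi> (p + t *\<^sub>R u) - \<phi> (p + t *\<^sub>R v) + \<phi> p) - t^2 * L u\<bar> \<le> e * t^2"
    proof -
      have "g t - g 0 = (\<phi> (p + t *\<^sub>R u + t *\<^sub>R v) - \<phi> (p + t *\<^sub>R u) - \<phi> (p + t *\<^sub>R v) + \<phi> p) - t^2 * L u"
        unfolding g_def by (simp add: power2_eq_square)
      moreover have "\<bar>t * g' z\<bar> \<le> t * (e * t)" using gz t by (simp add: abs_mult)
      ultimately show ?thesis using z by (simp add: power2_eq_square mult.assoc mult.commute mult.left_commute)
    qed
  qed
qed


lemma sym2:
  fixes \<phi> :: "'a::real_normed_vector \<Rightarrow> real"
  assumes U: "open U" "p \<in> U"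
  and d1: "\<And>x. x \<in> U \<Longrightarrow> (\<phi> has_derivative \<phi>' x) (at x)"
  and d2: "\<And>v. ((\<lambda>x. \<phi>' x v) has_derivative L v) (at p)"
  shows "L v u = L u v"
proof (rule ccontr)
  assume ne: "L v u \<noteq> L u v"
  define e where "e = \<bar>L v u - L u v\<bar> / 3"
  have e: "e > 0" using ne by (simp add: e_def)
  obtain da where da: "da > 0" "\<And>t. 0 < t \<and> t < da \<Longrightarrow>
     \<bar>(\<phi> (p + t *\<^sub>R u + t *\<^sub>R v) - \<phi> (p + t *\<^sub>R u) - \<phi> (p + t *\<^sub>R v) + \<phi> p) - t^2 * L v u\<bar> \<le> e * t^2"
    using sym2_aux[OF U d1 d2[of v] e, of u] by blast
  obtain db where db: "db > 0" "\<And>t. 0 < t \<and> t < db \<Longrightarrow>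
     \<bar>(\<phi> (p + t *\<^sub>R v + t *\<^sub>R u) - \<phi> (p + t *\<^sub>R v) - \<phi> (p + t *\<^sub>R u) + \<phi> p) - t^2 * L u v\<bar> \<le> e * t^2"
    using sym2_aux[OF U d1 d2[of u] e, of v] by blast
  define t where "t = min da db / 2"
  have t: "0 < t \<and> t < da" "0 < t \<and> t < db" using da db by (auto simp: t_def)
  have eq: "p + t *\<^sub>R v + t *\<^sub>R u = p + t *\<^sub>R u + t *\<^sub>R v" by (simp add: algebra_simps)
  have "\<bar>t^2 * L v u - t^2 * L u v\<bar> \<le> 2 * e * t^2"
    using da(2)[OF t(1)] db(2)[OF t(2)] unfolding eq by linarith
  hence "t^2 * \<bar>L v u - L u v\<bar> \<le> t^2 * (2 * e)"
  proof -
    have "t^2 * L v u - t^2 * L u v = t^2 * (L v u - L u v)" by (simp add: algebra_simps)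
    hence "\<bar>t^2 * L v u - t^2 * L u v\<bar> = t^2 * \<bar>L v u - L u v\<bar>" by (simp add: abs_mult)
    thus ?thesis using \<open>\<bar>t^2 * L v u - t^2 * L u v\<bar> \<le> 2 * e * t^2\<close> by (simp add: mult.commute)
  qed
  hence "\<bar>L v u - L u v\<bar> \<le> 2 * e" using t by (simp add: mult_le_cancel_left)
  thus False using e by (simp add: e_def)
qed



lemma lin_expand: "linear f \<Longrightarrow> f (v::real^'n) = (\<Sum>l\<in>UNIV. v$l *\<^sub>R f (axis l 1))"
proof -
  assume l: "linear f"
  have "f v = f (\<Sum>l\<in>UNIV. v$l *\<^sub>R axis l 1)"
    using basis_expansion[of v] by (simp add: scalar_mult_eq_scaleR)
  also have "\<dots> = (\<Sum>l\<in>UNIV. v$l *\<^sub>R f (axis l 1))"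
    by (simp add: linear_sum[OF l] linear_scale[OF l])
  finally show ?thesis .
qed

lemma mv_lin_left: "linear (\<lambda>A::real^'n^'m. A *v x)"
  using bounded_bilinear.bounded_linear_left[OF bb_mv] bounded_linear.linear by blast

locale wac =
  fixes n :: nat and U :: "(real^'n) set"
    and F Q G :: "real^'n \<Rightarrow> real^'n^'n" and xi eta :: "real^'n \<Rightarrow> real^'n"
  assumes W: "weak_almost_contact_metric n U F Q xi eta G"
begin

lemma openU: "open U" using W by (simp add: weak_almost_contact_metric_def riemannian_metric_def)
lemma Gsym_mat: "p \<in> U \<Longrightarrow> transpose (G p) = G p"
  using W by (simp add: weak_almost_contact_metric_def riemannian_metric_def)
lemma Gpos: "p \<in> U \<Longrightarrow> v \<noteq> 0 \<Longrightarrow> v \<bullet> (G p *v v) > 0"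
  using W by (simp add: weak_almost_contact_metric_def riemannian_metric_def)
lemma card: "CARD('n) = 2*n+1" using W by (simp add: weak_almost_contact_metric_def)
lemma rankF: "p \<in> U \<Longrightarrow> rank (F p) = 2*n" using W by (simp add: weak_almost_contact_metric_def)
lemma invQ: "p \<in> U \<Longrightarrow> invertible (Q p)" using W by (simp add: weak_almost_contact_metric_def)
lemma FF: "p \<in> U \<Longrightarrow> F p *v (F p *v v) = - (Q p *v v) + (eta p \<bullet> v) *\<^sub>R xi p"
  using W by (simp add: weak_almost_contact_metric_def)
lemma etaxi: "p \<in> U \<Longrightarrow> eta p \<bullet> xi p = 1" using W by (simp add: weak_almost_contact_metric_def)
lemma Qxi: "p \<in> U \<Longrightarrow> Q p *v xi p = xi p" using W by (simp add: weak_almost_contact_metric_def)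
lemma Kinv: "p \<in> U \<Longrightarrow> eta p \<bullet> v = 0 \<Longrightarrow> eta p \<bullet> (F p *v v) = 0"
  using W by (simp add: weak_almost_contact_metric_def)
lemma gFF: "p \<in> U \<Longrightarrow> (F p *v v) \<bullet> (G p *v (F p *v w)) = v \<bullet> (G p *v (Q p *v w)) - (eta p \<bullet> v) * (eta p \<bullet> w)"
  using W by (simp add: weak_almost_contact_metric_def gm_def)

lemma dG: "p \<in> U \<Longrightarrow> G differentiable (at p)"
  using W openU smooth_diff by (auto simp: weak_almost_contact_metric_def riemannian_metric_def)
lemma dF: "p \<in> U \<Longrightarrow> F differentiable (at p)"
  using W openU smooth_diff by (auto simp: weak_almost_contact_metric_def)
lemma dxi: "p \<in> U \<Longrightarrow> xi differentiable (at p)"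
  using W openU smooth_diff by (auto simp: weak_almost_contact_metric_def)
lemma deta: "p \<in> U \<Longrightarrow> eta differentiable (at p)"
  using W openU smooth_diff by (auto simp: weak_almost_contact_metric_def)
lemma deta_partial: "p \<in> U \<Longrightarrow> (\<lambda>q. frechet_derivative eta (at q) (axis i 1)) differentiable (at p)"
  using W openU smooth_partial_diff by (auto simp: weak_almost_contact_metric_def)

lemma injK: assumes p: "p \<in> U" shows "inj_on ((*v) (F p)) {x. eta p \<bullet> x = 0}"
proof (rule inj_onI)
  fix x y assume x: "x \<in> {x. eta p \<bullet> x = 0}" and y: "y \<in> {x. eta p \<bullet> x = 0}"
    and e: "F p *v x = F p *v y"
  have "F p *v (x - y) = 0" using e by (simp add: matrix_vector_mult_diff_distrib)
  hence "F p *v (F p *v (x - y)) = 0" by simp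
  moreover have "eta p \<bullet> (x - y) = 0" using x y by (simp add: inner_diff_right)
  ultimately have "Q p *v (x - y) = 0" using FF[OF p, of "x - y"] by simp
  hence "Q p *v (x - y) = Q p *v 0" by simp
  hence "x - y = 0" using inj_matrix_vector_mult[OF invQ[OF p]] by (meson injD)
  thus "x = y" by simp
qed

lemma rangeF: assumes p: "p \<in> U" shows "range ((*v) (F p)) = {x. eta p \<bullet> x = 0}"
proof -
  let ?K = "{x. eta p \<bullet> x = 0}" and ?f = "(*v) (F p)"
  have ne: "eta p \<noteq> 0" using etaxi[OF p] by auto
  have dimK: "dim ?K = 2*n" using dim_hyperplane[OF ne] card by simp
  have lin: "linear ?f" by (rule matrix_vector_mul_linear)
  have subK: "subspace ?K" by (rule subspace_hyperplane)
  have spK: "span ?K = ?K" using subK by (simp add: span_eq_iff)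
  have i: "inj_on ?f (span ?K)" using injK[OF p] spK by (simp only:)
  have dimFK: "dim (?f ` ?K) = 2*n" using dim_image_eq[OF lin i] dimK by simp
  have subFK: "subspace (?f ` ?K)" using linear_subspace_image[OF lin subK] .
  have FKK: "?f ` ?K \<subseteq> ?K" using Kinv[OF p] by auto
  have e1: "?f ` ?K = ?K" using subspace_dim_equal[OF subFK subK FKK] dimFK dimK by simp
  have subR: "subspace (range ?f)" using linear_subspace_image[OF lin subspace_UNIV] .
  have dimR: "dim (range ?f) = 2*n" using rank_dim_range[of "F p"] rankF[OF p] by simp
  have "?f ` ?K = range ?f" using subspace_dim_equal[OF subFK subR] dimR dimFK by auto
  thus ?thesis using e1 by simp
qed

lemma etaF: "p \<in> U \<Longrightarrow> eta p \<bullet> (F p *v v) = 0"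
  using rangeF by blast

lemma Fxi: assumes p: "p \<in> U" shows "F p *v xi p = 0"
proof -
  have a: "F p *v xi p \<in> {x. eta p \<bullet> x = 0}" using etaF[OF p] by simp
  have b: "(0::real^'n) \<in> {x. eta p \<bullet> x = 0}" by simp
  have "F p *v (F p *v xi p) = F p *v 0"
    using FF[OF p, of "xi p"] Qxi[OF p] etaxi[OF p] by simp
  thus ?thesis using inj_onD[OF injK[OF p] _ a b] by simp
qed

lemma gsym: "p \<in> U \<Longrightarrow> v \<bullet> (G p *v w) = w \<bullet> (G p *v v)"
  by (metis Gsym_mat dot_lmul_matrix inner_commute transpose_matrix_vector)

lemma etag: assumes p: "p \<in> U" shows "eta p \<bullet> v = v \<bullet> (G p *v xi p)"
  using gFF[OF p, of v "xi p"] Fxi[OF p] Qxi[OF p] etaxi[OF p] by simp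

lemma skew: assumes p: "p \<in> U" shows "v \<bullet> (G p *v (F p *v w)) = - ((F p *v v) \<bullet> (G p *v w))"
proof -
  define c where "c = eta p \<bullet> w"
  have "eta p \<bullet> (w - c *\<^sub>R xi p) = 0" using etaxi[OF p] by (simp add: c_def inner_diff_right)
  then obtain z where z: "F p *v z = w - c *\<^sub>R xi p" using rangeF[OF p] by (metis (mono_tags) mem_Collect_eq rangeE)
  have w: "w = F p *v z + c *\<^sub>R xi p" using z by simp
  have Fw: "F p *v w = F p *v (F p *v z)" using Fxi[OF p] 
    by (simp add: w matrix_vector_right_distrib matrix_vector_mult_scaleR)
  have "v \<bullet> (G p *v (F p *v (F p *v z))) = - (v \<bullet> (G p *v (Q p *v z))) + (eta p \<bullet> z) * (eta p \<bullet> v)"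
    using FF[OF p, of z] etag[OF p, of v]
    by (simp add: matrix_vector_right_distrib matrix_vector_mult_scaleR inner_add_right inner_minus_right
        vec.neg vec.scale vec.diff inner_diff_right)
  also have "\<dots> = - ((F p *v v) \<bullet> (G p *v (F p *v z)))" using gFF[OF p, of v z] by simp
  finally have 1: "v \<bullet> (G p *v (F p *v w)) = - ((F p *v v) \<bullet> (G p *v (F p *v z)))" using Fw by simp
  have "(F p *v v) \<bullet> (G p *v w) = (F p *v v) \<bullet> (G p *v (F p *v z)) + c * ((F p *v v) \<bullet> (G p *v xi p))"
    by (simp add: w matrix_vector_right_distrib matrix_vector_mult_scaleR inner_add_right)
  also have "(F p *v v) \<bullet> (G p *v xi p) = 0" using etag[OF p, of "F p *v v"] etaF[OF p] by simp
  finally show ?thesis using 1 by simp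
qed

lemma posdef0: assumes p: "p \<in> U" and x: "x \<bullet> (G p *v x) = 0" shows "x = 0"
  using Gpos[OF p, of x] x by (cases "x = 0") auto

lemma Ginv: assumes p: "p \<in> U" shows "G p ** matrix_inv (G p) = mat 1"
proof -
  have "\<forall>x. G p *v x = 0 \<longrightarrow> x = 0" using posdef0[OF p] by auto
  hence "invertible (G p)" using invertible_left_inverse matrix_left_invertible_ker by blast
  then have "\<exists>A'. G p ** A' = mat 1 \<and> A' ** G p = mat 1" by (simp add: invertible_def)
  hence "G p ** matrix_inv (G p) = mat 1 \<and> matrix_inv (G p) ** G p = mat 1"
    unfolding matrix_inv_def by (rule someI_ex)
  thus ?thesis by simp
qed

end


context wac begin

lemma hasD_form: "p \<in> U \<Longrightarrow> ((\<lambda>q. x \<bullet> (G q *v z)) has_derivative (\<lambda>h. x \<bullet> (dD G p h *v z))) (at p)"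
  using has_derivative_inner_right[OF hasD_mvc[OF hasD[OF dG]]] by blast

lemma dGsym: assumes p: "p \<in> U" shows "x \<bullet> (dD G p y *v z) = z \<bullet> (dD G p y *v x)"
proof -
  have a: "dD (\<lambda>q. x \<bullet> (G q *v z)) p y = x \<bullet> (dD G p y *v z)" using dD_unique[OF hasD_form[OF p]] .
  have b: "dD (\<lambda>q. z \<bullet> (G q *v x)) p y = z \<bullet> (dD G p y *v x)" using dD_unique[OF hasD_form[OF p]] .
  have c: "dD (\<lambda>q. x \<bullet> (G q *v z)) p y = dD (\<lambda>q. z \<bullet> (G q *v x)) p y"
    by (rule dD_local[OF _ openU p]) (auto intro: differentiableI hasD_form[OF p] gsym)
  show ?thesis using a b c by simp
qed

lemma christ1: assumes p: "p \<in> U"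
  shows "v \<bullet> (G p *v christoffel G p u x) =
     (1/2) * (v \<bullet> (dD G p u *v x) + v \<bullet> (dD G p x *v u) - u \<bullet> (dD G p v *v x))"
proof -
  define s where "s = (\<chi> l. (dD G p u *v x) $ l + (dD G p x *v u) $ l - u \<bullet> (dD G p (axis l 1) *v x))"
  have 1: "G p *v christoffel G p u x = (1/2) *\<^sub>R s"
    unfolding christoffel_def s_def
    by (simp add: matrix_vector_mult_scaleR matrix_vector_mul_assoc Ginv[OF p])
  have 2: "(\<Sum>l\<in>UNIV. v$l * (u \<bullet> (dD G p (axis l 1) *v x))) = u \<bullet> (dD G p v *v x)"
  proof -
    have "dD G p v = (\<Sum>l\<in>UNIV. v$l *\<^sub>R dD G p (axis l 1))" by (rule lin_expand[OF linD[OF dG[OF p]]])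
    hence "dD G p v *v x = (\<Sum>l\<in>UNIV. v$l *\<^sub>R (dD G p (axis l 1) *v x))"
      by (simp add: linear_sum[OF mv_lin_left] linear_scale[OF mv_lin_left] o_def)
    thus ?thesis by (simp add: inner_sum_right)
  qed
  have 3: "v \<bullet> s = v \<bullet> (dD G p u *v x) + v \<bullet> (dD G p x *v u) - (\<Sum>l\<in>UNIV. v$l * (u \<bullet> (dD G p (axis l 1) *v x)))"
    unfolding s_def inner_vec_def by (simp add: algebra_simps sum.distrib sum_subtractf)
  show ?thesis using 1 2 3 by simp
qed

lemma mcompat: assumes p: "p \<in> U"
  shows "v \<bullet> (dD G p u *v x) = v \<bullet> (G p *v christoffel G p u x) + x \<bullet> (G p *v christoffel G p u v)"
  using christ1[OF p, of v u x] christ1[OF p, of x u v] dGsym[OF p, of x u v] dGsym[OF p, of x v u]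
    dGsym[OF p, of v x u] apply (simp add: algebra_simps) done

lemma csym: assumes p: "p \<in> U" shows "christoffel G p u x = christoffel G p x u"
proof -
  have "(\<chi> l. (dD G p u *v x) $ l + (dD G p x *v u) $ l - u \<bullet> (dD G p (axis l 1) *v x)) =
        (\<chi> l. (dD G p x *v u) $ l + (dD G p u *v x) $ l - x \<bullet> (dD G p (axis l 1) *v u))"
    by (rule arg_cong[where f=vec_lambda], rule ext) (simp add: dGsym[OF p, of u _ x])
  thus ?thesis unfolding christoffel_def by simp
qed

lemma c0: assumes p: "p \<in> U" shows "christoffel G p u 0 = 0"
proof -
  have d0: "dD G p 0 = 0" using linear_0[OF linD[OF dG[OF p]]] .
  have z: "(\<chi> l. (0::real)) = (0::real^'n)" by (simp add: vec_eq_iff)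
  show ?thesis unfolding christoffel_def using d0 by (simp add: z)
qed

end


context wac begin

lemma dD_const: "dD (\<lambda>q. c) p v = 0"
  using dD_unique[OF has_derivative_const] by blast

lemma NF_xi: assumes p: "p \<in> U"
  shows "nablaT G F p X (xi p) = - (F p *v nablaV G xi p X)"
proof -
  have hd: "((\<lambda>q. F q *v xi q) has_derivative (\<lambda>h. F p *v dD xi p h + dD F p h *v xi p)) (at p)"
    using hasD_mv[OF hasD[OF dF[OF p]] hasD[OF dxi[OF p]]] .
  have "dD (\<lambda>q. F q *v xi q) p X = dD (\<lambda>q. 0) p X"
    by (rule dD_local[OF _ openU p]) (auto intro: differentiableI[OF has_derivative_const] Fxi)
  hence "F p *v dD xi p X + dD F p X *v xi p = 0" using dD_unique[OF hd, of X] dD_const by simp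
  thus ?thesis unfolding nablaT_def nablaV_def using Fxi[OF p] c0[OF p]
    by (simp add: matrix_vector_right_distrib algebra_simps eq_neg_iff_add_eq_0)
qed

lemma etanabla: assumes p: "p \<in> U" shows "eta p \<bullet> nablaV G xi p X = 0"
proof -
  have hd: "((\<lambda>q. xi q \<bullet> (G q *v xi q)) has_derivative
     (\<lambda>h. xi p \<bullet> (G p *v dD xi p h + dD G p h *v xi p) + dD xi p h \<bullet> (G p *v xi p))) (at p)"
    using has_derivative_inner[OF hasD[OF dxi[OF p]] hasD_mv[OF hasD[OF dG[OF p]] hasD[OF dxi[OF p]]]] .
  have "dD (\<lambda>q. xi q \<bullet> (G q *v xi q)) p X = dD (\<lambda>q. 1) p X"
    by (rule dD_local[OF _ openU p]) (auto intro: differentiableI[OF has_derivative_const] simp: etag[symmetric] etaxi)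
  hence 1: "xi p \<bullet> (G p *v dD xi p X + dD G p X *v xi p) + dD xi p X \<bullet> (G p *v xi p) = 0"
    using dD_unique[OF hd, of X] dD_const by simp
  have 2: "xi p \<bullet> (G p *v dD xi p X) = dD xi p X \<bullet> (G p *v xi p)" using gsym[OF p] .
  have 3: "xi p \<bullet> (dD G p X *v xi p) = 2 * (christoffel G p X (xi p) \<bullet> (G p *v xi p))"
    using mcompat[OF p, of "xi p" X "xi p"] gsym[OF p, of "xi p" "christoffel G p X (xi p)"] by simp
  have "nablaV G xi p X \<bullet> (G p *v xi p) = 0"
    using 1 2 3 unfolding nablaV_def by (simp add: inner_add_left inner_add_right matrix_vector_right_distrib)
  thus ?thesis using etag[OF p] by simp
qed

lemma sas_to_h: assumes p: "p \<in> U" and Q1: "Q p = mat 1"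
  and S: "\<And>v w. nablaT G F p v w = (gm G p v w) *\<^sub>R xi p - (eta p \<bullet> w) *\<^sub>R v"
  shows "nablaV G xi p X + F p *v X = 0"
proof -
  let ?N = "nablaV G xi p X"
  have "nablaT G F p X (xi p) = (eta p \<bullet> X) *\<^sub>R xi p - X"
    using S[of X "xi p"] etaxi[OF p] etag[OF p, of X] by (simp add: gm_def)
  hence FN: "F p *v ?N = X - (eta p \<bullet> X) *\<^sub>R xi p" using NF_xi[OF p, of X] by (simp add: algebra_simps)
  have "F p *v (F p *v ?N) = F p *v X" using Fxi[OF p]
    by (simp add: FN matrix_vector_mult_diff_distrib matrix_vector_mult_scaleR)
  moreover have "F p *v (F p *v ?N) = - ?N" using FF[OF p, of ?N] Q1 etanabla[OF p, of X] by simp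
  ultimately have "- ?N = F p *v X" by simp
  hence "?N = - (F p *v X)" by (metis minus_minus)
  thus ?thesis by simp
qed

end


locale wnsh = wac n U F Q G xi eta
  for n :: nat and U :: "(real^'n) set"
    and F Q G :: "real^'n \<Rightarrow> real^'n^'n" and xi eta :: "real^'n \<Rightarrow> real^'n" +
  assumes H: "\<And>q v. q \<in> U \<Longrightarrow> nablaV G xi q v + F q *v v = 0"
  and NS: "\<And>p v w. p \<in> U \<Longrightarrow> nablaT G F p v w + nablaT G F p w v
        = (2 * gm G p v w) *\<^sub>R xi p - (eta p \<bullet> w) *\<^sub>R v - (eta p \<bullet> v) *\<^sub>R w"
begin

lemma eta_eq: assumes q: "q \<in> U" shows "eta q = G q *v xi q"
proof -
  have "\<forall>v. (eta q - G q *v xi q) \<bullet> v = 0"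
  proof
    fix v
    have "eta q \<bullet> v = (G q *v xi q) \<bullet> v" using etag[OF q, of v] by (simp add: inner_commute)
    thus "(eta q - G q *v xi q) \<bullet> v = 0" by (simp add: inner_diff_left)
  qed
  hence "(eta q - G q *v xi q) \<bullet> (eta q - G q *v xi q) = 0" by blast
  thus ?thesis by simp
qed

lemma dxi_eq: "q \<in> U \<Longrightarrow> dD xi q v = - (F q *v v) - christoffel G q v (xi q)"
  using H[of q v] unfolding nablaV_def by (simp add: algebra_simps eq_neg_iff_add_eq_0)

lemma e1: assumes q: "q \<in> U"
  shows "dD eta q v \<bullet> w = - (w \<bullet> (G q *v (F q *v v))) - w \<bullet> (G q *v christoffel G q v (xi q))
            + w \<bullet> (dD G q v *v xi q)"
proof -
  have hd: "((\<lambda>r. G r *v xi r) has_derivative (\<lambda>h. G q *v dD xi q h + dD G q h *v xi q)) (at q)"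
    using hasD_mv[OF hasD[OF dG[OF q]] hasD[OF dxi[OF q]]] .
  have "dD eta q v = dD (\<lambda>r. G r *v xi r) q v"
    by (rule dD_local[OF _ openU q]) (auto intro: differentiableI[OF hd] simp: eta_eq)
  also have "\<dots> = G q *v dD xi q v + dD G q v *v xi q" using dD_unique[OF hd] .
  finally show ?thesis using dxi_eq[OF q, of v]
    by (simp add: inner_commute[of _ w] inner_add_right inner_diff_right matrix_vector_right_distrib
        vec.neg vec.diff)
qed

lemma dEta: assumes q: "q \<in> U"
  shows "dD eta q v \<bullet> w - dD eta q w \<bullet> v = 2 * (v \<bullet> (G q *v (F q *v w)))"
proof -
  have s1: "w \<bullet> (G q *v (F q *v v)) = - (v \<bullet> (G q *v (F q *v w)))"
    using skew[OF q, of w v] gsym[OF q, of "F q *v w" v] by simp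
  show ?thesis
    using e1[OF q, of v w] e1[OF q, of w v] christ1[OF q, of w v "xi q"] christ1[OF q, of v w "xi q"]
      dGsym[OF q, of w "xi q" v] s1 by (simp add: algebra_simps)
qed

lemma Ediff: assumes p: "p \<in> U" shows "(\<lambda>r. dD eta r v) differentiable (at p)"
proof -
  have "(\<lambda>r. \<Sum>i\<in>UNIV. v$i *\<^sub>R frechet_derivative eta (at r) (axis i 1)) differentiable (at p)"
  proof -
    have "\<And>i. (\<lambda>r. v$i *\<^sub>R frechet_derivative eta (at r) (axis i 1)) differentiable (at p)"
    proof -
      fix i
      obtain D where "((\<lambda>r. frechet_derivative eta (at r) (axis i 1)) has_derivative D) (at p)"
        using deta_partial[OF p, of i] unfolding differentiable_def by blast
      thus "(\<lambda>r. v$i *\<^sub>R frechet_derivative eta (at r) (axis i 1)) differentiable (at p)"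
        by (rule differentiableI[OF has_derivative_scaleR_right])
    qed
    thus ?thesis by (intro differentiable_sum) auto
  qed
  then obtain D where D: "((\<lambda>r. \<Sum>i\<in>UNIV. v$i *\<^sub>R frechet_derivative eta (at r) (axis i 1)) has_derivative D) (at p)"
    unfolding differentiable_def by blast
  have "((\<lambda>r. dD eta r v) has_derivative D) (at p)"
  proof (rule has_derivative_transform_within_open[OF D openU p])
    fix r assume r: "r \<in> U"
    show "(\<Sum>i\<in>UNIV. v$i *\<^sub>R frechet_derivative eta (at r) (axis i 1)) = dD eta r v"
      using lin_expand[OF linD[OF deta[OF r]], of v] by (simp add: dD_def)
  qed
  thus ?thesis by (rule differentiableI)
qed

definition PD where "PD p u v w = v \<bullet> (dD G p u *v (F p *v w)) + v \<bullet> (G p *v (dD F p u *v w))"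

definition M where "M p v h = dD (\<lambda>r. dD eta r v) p h"

lemma hasPhi: assumes p: "p \<in> U"
  shows "((\<lambda>r. 2 * (v \<bullet> (G r *v (F r *v w)))) has_derivative (\<lambda>h. 2 * PD p h v w)) (at p)"
proof -
  have "((\<lambda>r. G r *v (F r *v w)) has_derivative (\<lambda>h. G p *v (dD F p h *v w) + dD G p h *v (F p *v w))) (at p)"
    using hasD_mv[OF hasD[OF dG[OF p]] hasD_mvc[OF hasD[OF dF[OF p]]]] .
  from has_derivative_mult_right[OF has_derivative_inner_right[OF this, of v], of 2]
  show ?thesis unfolding PD_def by (simp add: inner_add_right algebra_simps)
qed

lemma hasM: assumes p: "p \<in> U"
  shows "((\<lambda>r. dD eta r v \<bullet> w) has_derivative (\<lambda>h. M p v h \<bullet> w)) (at p)"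
  unfolding M_def using has_derivative_inner_left[OF hasD[OF Ediff[OF p]]] .

lemma Msym: assumes p: "p \<in> U" shows "M p v u \<bullet> w = M p u v \<bullet> w"
proof -
  have d1: "\<And>x. x \<in> U \<Longrightarrow> ((\<lambda>r. eta r \<bullet> w) has_derivative (\<lambda>h. dD eta x h \<bullet> w)) (at x)"
    using has_derivative_inner_left[OF hasD[OF deta]] by blast
  show ?thesis
    using sym2[where \<phi> = "\<lambda>r. eta r \<bullet> w" and \<phi>' = "\<lambda>x h. dD eta x h \<bullet> w" and L = "\<lambda>v h. M p v h \<bullet> w",
        OF openU p d1 hasM[OF p]] by blast
qed

lemma Mrel: assumes p: "p \<in> U" shows "M p v u \<bullet> w - M p w u \<bullet> v = 2 * PD p u v w"
proof -
  have hl: "((\<lambda>r. dD eta r v \<bullet> w - dD eta r w \<bullet> v) has_derivative (\<lambda>h. M p v h \<bullet> w - M p w h \<bullet> v)) (at p)"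
    using has_derivative_diff[OF hasM[OF p] hasM[OF p]] .
  have "dD (\<lambda>r. dD eta r v \<bullet> w - dD eta r w \<bullet> v) p u = dD (\<lambda>r. 2 * (v \<bullet> (G r *v (F r *v w)))) p u"
    by (rule dD_local[OF differentiableI[OF hasPhi[OF p]] openU p]) (simp add: dEta)
  thus ?thesis using dD_unique[OF hl] dD_unique[OF hasPhi[OF p]] by simp
qed

lemma star: assumes p: "p \<in> U" shows "PD p u v w + PD p v w u + PD p w u v = 0"
  using Mrel[OF p, of v u w] Mrel[OF p, of w v u] Mrel[OF p, of u w v]
    Msym[OF p, of v u w] Msym[OF p, of w u v] Msym[OF p, of w v u] by linarith

end


context wnsh begin

definition C where "C p u v w = v \<bullet> (G p *v nablaT G F p u w)"

lemma hasPhi1: assumes p: "p \<in> U"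
  shows "((\<lambda>r. v \<bullet> (G r *v (F r *v w))) has_derivative (\<lambda>h. PD p h v w)) (at p)"
proof -
  have "((\<lambda>r. G r *v (F r *v w)) has_derivative (\<lambda>h. G p *v (dD F p h *v w) + dD G p h *v (F p *v w))) (at p)"
    using hasD_mv[OF hasD[OF dG[OF p]] hasD_mvc[OF hasD[OF dF[OF p]]]] .
  from has_derivative_inner_right[OF this, of v]
  show ?thesis unfolding PD_def by (simp add: inner_add_right algebra_simps)
qed

lemma PDskew: assumes p: "p \<in> U" shows "PD p u v w = - PD p u w v"
proof -
  have h2: "((\<lambda>r. - (w \<bullet> (G r *v (F r *v v)))) has_derivative (\<lambda>h. - PD p h w v)) (at p)"
    using has_derivative_minus[OF hasPhi1[OF p]] .
  have "dD (\<lambda>r. v \<bullet> (G r *v (F r *v w))) p u = dD (\<lambda>r. - (w \<bullet> (G r *v (F r *v v)))) p u"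
  proof (rule dD_local[OF differentiableI[OF h2] openU p])
    fix r assume r: "r \<in> U"
    show "- (w \<bullet> (G r *v (F r *v v))) = v \<bullet> (G r *v (F r *v w))"
      using skew[OF r, of v w] gsym[OF r, of "F r *v v" w] by simp
  qed
  thus ?thesis using dD_unique[OF hasPhi1[OF p]] dD_unique[OF h2] by simp
qed

lemma Cexp: assumes p: "p \<in> U"
  shows "C p u v w = PD p u v w - (F p *v w) \<bullet> (G p *v christoffel G p u v)
                     + (F p *v v) \<bullet> (G p *v christoffel G p u w)"
  using skew[OF p, of v "christoffel G p u w"] mcompat[OF p, of v u "F p *v w"]
  unfolding C_def nablaT_def PD_def
  by (simp add: matrix_vector_right_distrib vec.diff inner_add_right inner_diff_right)

lemma Cskew: assumes p: "p \<in> U" shows "C p u v w = - C p u w v"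
  using Cexp[OF p, of u v w] Cexp[OF p, of u w v] PDskew[OF p, of u v w] by linarith

lemma Ccyc: assumes p: "p \<in> U" shows "C p u v w + C p v w u + C p w u v = 0"
proof -
  have a: "(F p *v w) \<bullet> (G p *v christoffel G p v u) = (F p *v w) \<bullet> (G p *v christoffel G p u v)"
    by (simp add: csym[OF p, of v u])
  have b: "(F p *v v) \<bullet> (G p *v christoffel G p w u) = (F p *v v) \<bullet> (G p *v christoffel G p u w)"
    by (simp add: csym[OF p, of w u])
  have c: "(F p *v u) \<bullet> (G p *v christoffel G p w v) = (F p *v u) \<bullet> (G p *v christoffel G p v w)"
    by (simp add: csym[OF p, of w v])
  show ?thesis using Cexp[OF p, of u v w] Cexp[OF p, of v w u] Cexp[OF p, of w u v] star[OF p, of u v w]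
    a b c by linarith
qed

lemma Cnear: assumes p: "p \<in> U"
  shows "C p a b c + C p c b a = 2 * ((b \<bullet> (G p *v xi p)) * (a \<bullet> (G p *v c)))
     - (c \<bullet> (G p *v xi p)) * (b \<bullet> (G p *v a)) - (a \<bullet> (G p *v xi p)) * (b \<bullet> (G p *v c))"
proof -
  have L: "b \<bullet> (G p *v (nablaT G F p a c + nablaT G F p c a)) = C p a b c + C p c b a"
    by (simp add: C_def matrix_vector_right_distrib inner_add_right)
  have R: "b \<bullet> (G p *v ((2 * gm G p a c) *\<^sub>R xi p - (eta p \<bullet> c) *\<^sub>R a - (eta p \<bullet> a) *\<^sub>R c))
      = 2 * ((b \<bullet> (G p *v xi p)) * (a \<bullet> (G p *v c))) - (eta p \<bullet> c) * (b \<bullet> (G p *v a))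
        - (eta p \<bullet> a) * (b \<bullet> (G p *v c))"
    by (simp add: gm_def matrix_vector_mult_diff_distrib matrix_vector_mult_scaleR inner_diff_right)
  show ?thesis using L R NS[OF p, of a c] etag[OF p, of c] etag[OF p, of a] by simp
qed

lemma Cformula: assumes p: "p \<in> U"
  shows "C p u v w = (v \<bullet> (G p *v xi p)) * (u \<bullet> (G p *v w)) - (w \<bullet> (G p *v xi p)) * (u \<bullet> (G p *v v))"
proof -
  have r1: "v \<bullet> (G p *v u) = u \<bullet> (G p *v v)" using gsym[OF p] .
  have r2: "w \<bullet> (G p *v u) = u \<bullet> (G p *v w)" using gsym[OF p] .
  have r3: "w \<bullet> (G p *v v) = v \<bullet> (G p *v w)" using gsym[OF p] .
  note n1 = Cnear[OF p, of v w u, unfolded r1 r2 r3]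
  note n2 = Cnear[OF p, of w u v, unfolded r1 r2 r3]
  note n3 = Cnear[OF p, of u v w, unfolded r1 r2 r3]
  note s1 = Cskew[OF p, of u w v]
  note s2 = Cskew[OF p, of v u w]
  note s3 = Cskew[OF p, of w u v]
  note s4 = Cskew[OF p, of v w u]
  note cy = Ccyc[OF p, of u v w]
  show ?thesis using n1 n2 n3 s1 s2 s3 s4 cy by linarith
qed

end


context wnsh begin

lemma sasF: assumes p: "p \<in> U"
  shows "nablaT G F p u w = (gm G p u w) *\<^sub>R xi p - (eta p \<bullet> w) *\<^sub>R u"
proof -
  define R where "R = nablaT G F p u w - ((gm G p u w) *\<^sub>R xi p - (eta p \<bullet> w) *\<^sub>R u)"
  have z: "v \<bullet> (G p *v R) = 0" for v
  proof -
    have "v \<bullet> (G p *v R) = C p u v w - (u \<bullet> (G p *v w)) * (v \<bullet> (G p *v xi p)) + (w \<bullet> (G p *v xi p)) * (v \<bullet> (G p *v u))"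
      unfolding R_def C_def gm_def etag[OF p]
      by (simp add: matrix_vector_mult_diff_distrib matrix_vector_mult_scaleR inner_diff_right)
    thus ?thesis using Cformula[OF p, of u v w] gsym[OF p, of v u] by (simp add: mult.commute)
  qed
  have "R = 0" using posdef0[OF p z] .
  thus ?thesis unfolding R_def by simp
qed

lemma Q1: assumes p: "p \<in> U" shows "Q p = mat 1"
proof -
  have "Q p *v X = X" for X
  proof -
    have a: "nablaT G F p X (xi p) = (eta p \<bullet> X) *\<^sub>R xi p - X"
      using sasF[OF p, of X "xi p"] etaxi[OF p] etag[OF p, of X] by (simp add: gm_def)
    have b: "nablaV G xi p X = - (F p *v X)" using H[OF p, of X] by (simp add: eq_neg_iff_add_eq_0)
    have "nablaT G F p X (xi p) = F p *v (F p *v X)" using NF_xi[OF p, of X] b by (simp add: vec.neg)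
    also have "\<dots> = - (Q p *v X) + (eta p \<bullet> X) *\<^sub>R xi p" using FF[OF p] .
    finally show ?thesis using a by (simp add: algebra_simps)
  qed
  thus ?thesis by (simp add: matrix_eq)
qed

end

theorem mainTheorem13:
  fixes n :: nat and U :: "(real^'n) set"
    and F Q G :: "real^'n \<Rightarrow> real^'n^'n" and xi eta :: "real^'n \<Rightarrow> real^'n"
  assumes wns: "weak_nearly_sasakian n U F Q xi eta G"
    and Qt: "\<forall>p\<in>U. \<forall>v w. eta p \<bullet> w = 0 \<longrightarrow> nablaT G (\<lambda>q. Q q - mat 1) p v w = 0"
  defines "h \<equiv> (\<lambda>p v. nablaV G xi p v + F p *v v)"
  shows "(\<forall>p\<in>U. \<forall>v. h p v = 0) \<longleftrightarrow> sasakian n U F Q xi eta G"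
proof -
  have W: "weak_almost_contact_metric n U F Q xi eta G" using wns by (simp add: weak_nearly_sasakian_def)
  have wac: "wac n U F Q G xi eta" using W by (simp add: wac_def)
  interpret wac n U F Q G xi eta by (fact wac)
  show ?thesis
  proof
    assume h0: "\<forall>p\<in>U. \<forall>v. h p v = 0"
    have "wnsh n U F Q G xi eta"
      unfolding wnsh_def wnsh_axioms_def
      using wac h0 wns by (simp add: h_def weak_nearly_sasakian_def)
    then interpret wnsh n U F Q G xi eta .
    show "sasakian n U F Q xi eta G" unfolding sasakian_def using W Q1 sasF by blast
  next
    assume s: "sasakian n U F Q xi eta G"
    show "\<forall>p\<in>U. \<forall>v. h p v = 0"
      using s sas_to_h unfolding sasakian_def h_def by blast
  qed
qed


end
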